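(* For $\gamma\ge0$ let $P_1(\gamma),P_2(\gamma),\dots$ be i.i.d. Poisson random variables with parameter $\gamma$. Let $x\in\mathbb{R}$, $\delta>0$, $\lambda\ge0$, $\epsilon>0$, and set $\lambda^-_\epsilon=\max\{0,\lambda-\epsilon\}$, $\lambda^+_\epsilon=\lambda+\epsilon$. Then for every $n\in\mathbb{N}$, $$\inf_{\gamma\in(\lambda-\epsilon,\lambda+\epsilon)\cap[0,\infty)}\mathbb{P}\Big(\tfrac1n\textstyle\sum_{i=1}^nP_i(\gamma)\in(x-\delta,x+\delta)\Big)=\inf_{\gamma\in C}\mathbb{P}\Big(\tfrac1n\textstyle\sum_{i=1}^nP_i(\gamma)\in(x-\delta,x+\delta)\Big),$$ where $C=\big((\lambda-\epsilon,\lambda+\epsilon)\cap[x-\delta,x+\delta]\cap[0,\infty)\big)\cup\{\lambda^-_\epsilon,\lambda^+_\epsilon\}$. *)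

theory Defs
  imports "HOL-Probability.Probability"
begin

text \<open>Poisson distribution with parameter gamma >= 0; for gamma = 0 it is the
  point mass at 0 (the library's poisson_pmf is only specified for rate > 0).\<close>
definition poisson :: "real \<Rightarrow> nat pmf" where
  "poisson \<gamma> = (if \<gamma> = 0 then return_pmf 0 else poisson_pmf \<gamma>)"

definition iid_poisson :: "nat \<Rightarrow> real \<Rightarrow> (nat \<Rightarrow> nat) pmf" where
  "iid_poisson n \<gamma> = Pi_pmf {1..n} 0 (\<lambda>_. poisson \<gamma>)"

definition mean_prob :: "nat \<Rightarrow> real \<Rightarrow> real \<Rightarrow> real \<Rightarrow> real" where
  "mean_prob n \<gamma> x \<delta> =
     measure_pmf.prob (iid_poisson n \<gamma>)
       {P. (\<Sum>i=1..n. real (P i)) / real n \<in> {x - \<delta> <..< x + \<delta>}}"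

end

theory Submission imports Defs begin

lemma pmf_poisson': "\<gamma> \<ge> 0 \<Longrightarrow> pmf (poisson \<gamma>) k = \<gamma> ^ k / fact k * exp (-\<gamma>)"
  by (cases k) (auto simp: poisson_def pmf_return indicator_def)

lemma poisson_conv:
  assumes "a \<ge> 0" "b \<ge> 0"
  shows "map_pmf (\<lambda>(y,s). y + s) (pair_pmf (poisson a) (poisson b)) = poisson (a + b)"
proof (rule pmf_eqI)
  fix k :: nat
  have "pmf (map_pmf (\<lambda>(y,s). y + s) (pair_pmf (poisson a) (poisson b))) k
      = measure_pmf.prob (pair_pmf (poisson a) (poisson b)) ((\<lambda>(y,s). y + s) -` {k})"
    by (rule pmf_map)
  also have "(\<lambda>(y,s). y + s) -` {k} = (\<lambda>j. (j, k - j)) ` {..k}"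
    by (auto simp: image_iff)
  also have "measure_pmf.prob (pair_pmf (poisson a) (poisson b)) \<dots>
     = (\<Sum>p\<in>(\<lambda>j. (j, k - j)) ` {..k}. pmf (pair_pmf (poisson a) (poisson b)) p)"
    by (rule measure_measure_pmf_finite) auto
  also have "\<dots> = (\<Sum>j\<le>k. pmf (poisson a) j * pmf (poisson b) (k - j))"
    by (subst sum.reindex) (auto simp: inj_on_def pmf_pair)
  also have "\<dots> = (\<Sum>j\<le>k. (k choose j) * a ^ j * b ^ (k - j)) / fact k * exp (-(a+b))"
    unfolding sum_divide_distrib sum_distrib_right
  proof (rule sum.cong[OF refl])
    fix j assume "j \<in> {..k}"
    hence "j \<le> k" by simp
    then show "pmf (poisson a) j * pmf (poisson b) (k - j) =
         real (k choose j) * a ^ j * b ^ (k - j) / fact k * exp (- (a + b))"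
      using assms by (simp add: pmf_poisson' binomial_fact exp_add[symmetric] exp_minus field_simps)
  qed
  also have "\<dots> = pmf (poisson (a+b)) k"
    using assms by (simp add: pmf_poisson' binomial_ring[symmetric] add.commute)
  finally show "pmf (map_pmf (\<lambda>(y,s). y + s) (pair_pmf (poisson a) (poisson b))) k = pmf (poisson (a+b)) k" .
qed

lemma poisson_sum:
  assumes "finite A" "\<gamma> \<ge> 0"
  shows "map_pmf (\<lambda>P. \<Sum>i\<in>A. P i) (Pi_pmf A 0 (\<lambda>_. poisson \<gamma>)) = poisson (real (card A) * \<gamma>)"
  using assms(1)
proof (induction A rule: finite_induct)
  case empty
  then show ?case by (simp add: poisson_def map_return_pmf)
next
  case (insert x A)
  have "map_pmf (\<lambda>P. \<Sum>i\<in>insert x A. P i) (Pi_pmf (insert x A) 0 (\<lambda>_. poisson \<gamma>))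
     = map_pmf (\<lambda>P. \<Sum>i\<in>insert x A. P i) (map_pmf (\<lambda>(y,f). f(x:=y)) (pair_pmf (poisson \<gamma>) (Pi_pmf A 0 (\<lambda>_. poisson \<gamma>))))"
    using insert by (subst Pi_pmf_insert) auto
  also have "\<dots> = map_pmf (\<lambda>(y,s). y + s) (map_pmf (\<lambda>(y,f). (y, \<Sum>i\<in>A. f i)) (pair_pmf (poisson \<gamma>) (Pi_pmf A 0 (\<lambda>_. poisson \<gamma>))))"
    unfolding pmf.map_comp
  proof (rule map_pmf_cong[OF refl])
    fix p assume "p \<in> set_pmf (pair_pmf (poisson \<gamma>) (Pi_pmf A 0 (\<lambda>_. poisson \<gamma>)))"
    obtain y f where p: "p = (y, f)" by fastforce
    have "(\<Sum>i\<in>A. (f(x:=y)) i) = (\<Sum>i\<in>A. f i)"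
      using insert by (intro sum.cong) auto
    then show "((\<lambda>P. \<Sum>i\<in>insert x A. P i) \<circ> (\<lambda>(y, f). f(x := y))) p =
         ((\<lambda>(y, s). y + s) \<circ> (\<lambda>(y, f). (y, \<Sum>i\<in>A. f i))) p"
      using insert by (simp add: p)
  qed
  also have "map_pmf (\<lambda>(y,f). (y, \<Sum>i\<in>A. f i)) (pair_pmf (poisson \<gamma>) (Pi_pmf A 0 (\<lambda>_. poisson \<gamma>)))
      = pair_pmf (map_pmf id (poisson \<gamma>)) (map_pmf (\<lambda>f. \<Sum>i\<in>A. f i) (Pi_pmf A 0 (\<lambda>_. poisson \<gamma>)))"
    by (subst map_pair[symmetric]) (simp add: id_def)
  also have "\<dots> = pair_pmf (poisson \<gamma>) (poisson (real (card A) * \<gamma>))"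
    using insert by simp
  also have "map_pmf (\<lambda>(y,s). y + s) \<dots> = poisson (\<gamma> + real (card A) * \<gamma>)"
    using assms by (intro poisson_conv) auto
  also have "\<gamma> + real (card A) * \<gamma> = real (card (insert x A)) * \<gamma>"
    using insert by (simp add: algebra_simps)
  finally show ?case .
qed


definition gfun :: "nat \<Rightarrow> nat \<Rightarrow> real \<Rightarrow> real" where
  "gfun a c \<mu> = (\<Sum>k=a..<c. \<mu> ^ k / fact k) * exp (-\<mu>)"

lemma set_eq_interval:
  fixes L U :: real
  shows "{k::nat. real k \<in> {L<..<U}} = {nat (\<lfloor>L\<rfloor> + 1)..<nat \<lceil>U\<rceil>}"
proof -
  have "real k > L \<longleftrightarrow> k \<ge> nat (\<lfloor>L\<rfloor> + 1)" for k :: nat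
    by linarith
  moreover have "real k < U \<longleftrightarrow> k < nat \<lceil>U\<rceil>" for k :: nat
    by (metis nat_ceiling_le_eq verit_comp_simplify1(3))
  ultimately show ?thesis by auto
qed

lemma mean_prob_eq:
  assumes "n \<ge> 1" "\<gamma> \<ge> 0"
  shows "mean_prob n \<gamma> x \<delta> = gfun (nat (\<lfloor>n*(x-\<delta>)\<rfloor> + 1)) (nat \<lceil>n*(x+\<delta>)\<rceil>) (n * \<gamma>)"
proof -
  let ?S = "\<lambda>P::nat\<Rightarrow>nat. \<Sum>i=1..n. P i"
  have "{P. (\<Sum>i=1..n. real (P i)) / real n \<in> {x - \<delta> <..< x + \<delta>}}
        = ?S -` {k. real k \<in> {n*(x-\<delta>)<..<n*(x+\<delta>)}}"
    using assms by (auto simp: field_simps simp flip: of_nat_sum)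
  hence "mean_prob n \<gamma> x \<delta> = measure_pmf.prob (map_pmf ?S (iid_poisson n \<gamma>)) {k. real k \<in> {n*(x-\<delta>)<..<n*(x+\<delta>)}}"
    unfolding mean_prob_def by (simp add: measure_map_pmf)
  also have "map_pmf ?S (iid_poisson n \<gamma>) = poisson (n * \<gamma>)"
    unfolding iid_poisson_def using poisson_sum[of "{1..n}" \<gamma>] assms by simp
  also have "measure_pmf.prob (poisson (n * \<gamma>)) {k. real k \<in> {n*(x-\<delta>)<..<n*(x+\<delta>)}}
     = (\<Sum>k\<in>{nat (\<lfloor>n*(x-\<delta>)\<rfloor> + 1)..<nat \<lceil>n*(x+\<delta>)\<rceil>}. pmf (poisson (n*\<gamma>)) k)"
    unfolding set_eq_interval by (rule measure_measure_pmf_finite) auto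
  also have "\<dots> = gfun (nat (\<lfloor>n*(x-\<delta>)\<rfloor> + 1)) (nat \<lceil>n*(x+\<delta>)\<rceil>) (n * \<gamma>)"
    unfolding gfun_def sum_distrib_right using assms by (intro sum.cong) (auto simp: pmf_poisson')
  finally show ?thesis .
qed


definition vfun :: "nat \<Rightarrow> real \<Rightarrow> real" where
  "vfun k \<mu> = (if k = 0 then 0 else \<mu> ^ (k - 1) / fact (k - 1))"

lemma vfun_Suc: "vfun (Suc k) \<mu> = \<mu> ^ k / fact k"
  by (simp add: vfun_def)

lemma deriv_term: "((\<lambda>\<mu>. \<mu> ^ k / fact k) has_real_derivative vfun k \<mu>) (at \<mu>)"
proof (cases k)
  case 0 then show ?thesis by (simp add: vfun_def)
next
  case (Suc m)
  show ?thesis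
  proof -
    have "((\<lambda>\<mu>. \<mu> ^ Suc m / fact (Suc m)) has_real_derivative (real (Suc m) * \<mu> ^ m) / fact (Suc m)) (at \<mu>)"
      by (rule DERIV_cdivide) (use DERIV_pow[of "Suc m"] in simp)
    moreover have "(real (Suc m) * \<mu> ^ m) / fact (Suc m) = vfun (Suc m) \<mu>"
      by (simp add: vfun_def fact_Suc del: of_nat_Suc)
    ultimately show ?thesis using Suc by simp
  qed
qed

lemma gfun_deriv:
  assumes "a \<le> c"
  shows "(gfun a c has_real_derivative (vfun a \<mu> - vfun c \<mu>) * exp (-\<mu>)) (at \<mu>)"
proof -
  have "((\<lambda>\<mu>. (\<Sum>k=a..<c. \<mu> ^ k / fact k) * exp (-\<mu>)) has_real_derivative
      (\<Sum>k=a..<c. vfun k \<mu>) * exp (-\<mu>) + (exp (-\<mu>) * (-1)) * (\<Sum>k=a..<c. \<mu> ^ k / fact k)) (at \<mu>)"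
  proof -
    have d1: "((\<lambda>\<mu>. \<Sum>k=a..<c. \<mu> ^ k / fact k) has_real_derivative (\<Sum>k=a..<c. vfun k \<mu>)) (at \<mu>)"
      by (rule DERIV_sum) (rule deriv_term)
    have d2: "((\<lambda>\<mu>. exp (-\<mu>)) has_real_derivative exp (-\<mu>) * (-1)) (at \<mu>)"
      by (auto intro!: derivative_eq_intros)
    show ?thesis by (rule DERIV_mult[OF d1 d2])
  qed
  moreover have "(\<Sum>k=a..<c. vfun k \<mu>) * exp (-\<mu>) + (exp (-\<mu>) * (-1)) * (\<Sum>k=a..<c. \<mu> ^ k / fact k)
      = (vfun a \<mu> - vfun c \<mu>) * exp (-\<mu>)"
  proof -
    have "(\<Sum>k=a..<c. \<mu> ^ k / fact k) - (\<Sum>k=a..<c. vfun k \<mu>) = (\<Sum>k=a..<c. vfun (Suc k) \<mu> - vfun k \<mu>)"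
      by (simp add: vfun_Suc sum_subtractf)
    also have "\<dots> = vfun c \<mu> - vfun a \<mu>"
      using assms by (rule sum_Suc_diff')
    finally have eq: "(\<Sum>k=a..<c. \<mu> ^ k / fact k) = (\<Sum>k=a..<c. vfun k \<mu>) + vfun c \<mu> - vfun a \<mu>" by linarith
    show ?thesis by (simp add: eq algebra_simps)
  qed
  ultimately show ?thesis unfolding gfun_def[abs_def] by simp
qed

lemma single_crossing:
  assumes "a < c" "0 < \<xi>1" "\<xi>1 < \<xi>2" "vfun a \<xi>1 < vfun c \<xi>1"
  shows "vfun a \<xi>2 \<le> vfun c \<xi>2"
proof (cases "a = 0")
  case True
  then show ?thesis using assms by (simp add: vfun_def)
next
  case False
  define p where "p = a - 1"
  define d where "d = c - a"
  have c: "c - 1 = p + d" and a: "a - 1 = p" using False assms(1) by (auto simp: p_def d_def)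
  have fp: "fact p > (0::real)" "fact (p+d) > (0::real)" by auto
  have "\<xi>1 ^ p / fact p < \<xi>1 ^ p * \<xi>1 ^ d / fact (p + d)"
    using assms(4) False assms(1) unfolding vfun_def a c by (simp add: power_add)
  hence h1: "1 / fact p < \<xi>1 ^ d / fact (p + d)"
    using assms(2) by (simp add: field_simps)
  have "\<xi>1 ^ d \<le> \<xi>2 ^ d" using assms by (intro power_mono) auto
  hence "1 / fact p < \<xi>2 ^ d / fact (p + d)"
  proof -
    have "\<xi>1 ^ d / fact (p + d) \<le> \<xi>2 ^ d / fact (p + d)"
      using \<open>\<xi>1 ^ d \<le> \<xi>2 ^ d\<close> fp by (intro divide_right_mono) auto
    thus ?thesis using h1 by linarith
  qed
  hence "\<xi>2 ^ p * (1 / fact p) \<le> \<xi>2 ^ p * (\<xi>2 ^ d / fact (p + d))"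
    using assms by (intro mult_left_mono) auto
  thus ?thesis
    using False assms(1) unfolding vfun_def a c by (simp add: power_add)
qed

lemma gfun_quasiconcave:
  assumes "0 \<le> m1" "m1 \<le> m" "m \<le> m2"
  shows "gfun a c m \<ge> min (gfun a c m1) (gfun a c m2)"
proof (cases "a < c")
  case False
  then show ?thesis by (simp add: gfun_def)
next
  case True
  show ?thesis
  proof (rule ccontr)
    assume "\<not> ?thesis"
    hence lt1: "gfun a c m < gfun a c m1" and lt2: "gfun a c m < gfun a c m2" by auto
    hence "m1 < m" "m < m2" using assms by (auto simp: order.order_iff_strict)
    obtain z1 where z1: "m1 < z1" "z1 < m" "gfun a c m - gfun a c m1 = (m - m1) * ((vfun a z1 - vfun c z1) * exp (-z1))"
      using MVT2[OF \<open>m1 < m\<close>, of "gfun a c" "\<lambda>\<mu>. (vfun a \<mu> - vfun c \<mu>) * exp (-\<mu>)"]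
        gfun_deriv True by auto
    obtain z2 where z2: "m < z2" "z2 < m2" "gfun a c m2 - gfun a c m = (m2 - m) * ((vfun a z2 - vfun c z2) * exp (-z2))"
      using MVT2[OF \<open>m < m2\<close>, of "gfun a c" "\<lambda>\<mu>. (vfun a \<mu> - vfun c \<mu>) * exp (-\<mu>)"]
        gfun_deriv True by auto
    have "(vfun a z1 - vfun c z1) * exp (-z1) < 0"
    proof -
      have "(m - m1) * ((vfun a z1 - vfun c z1) * exp (-z1)) < 0" using z1(3) lt1 by linarith
      thus ?thesis using \<open>m1 < m\<close> by (auto simp: mult_less_0_iff)
    qed
    hence "vfun a z1 < vfun c z1" by (simp add: mult_less_0_iff)
    moreover have "0 < z1" using z1(1) assms(1) by linarith
    moreover have "z1 < z2" using z1(2) z2(1) by linarith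
    ultimately have "vfun a z2 \<le> vfun c z2"
      using single_crossing[OF True] by blast
    hence hz: "(vfun a z2 - vfun c z2) * exp (-z2) \<le> 0" by (simp add: mult_le_0_iff)
    have "(m2 - m) * ((vfun a z2 - vfun c z2) * exp (-z2)) \<le> 0"
      using mult_nonneg_nonpos[of "m2 - m" "(vfun a z2 - vfun c z2) * exp (-z2)"] hz \<open>m < m2\<close> by simp
    thus False using z2(3) lt2 by linarith
  qed
qed

lemma gfun_cont: "continuous_on UNIV (gfun a c)"
  unfolding gfun_def[abs_def] by (intro continuous_intros) auto


theorem proposition3:
  fixes x \<delta> lam \<epsilon> :: real and n :: nat
  assumes "\<delta> > 0" and "lam \<ge> 0" and "\<epsilon> > 0" and "n \<ge> 1"
  shows "(INF \<gamma> \<in> {lam - \<epsilon> <..< lam + \<epsilon>} \<inter> {0..}. mean_prob n \<gamma> x \<delta>) =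
         (INF \<gamma> \<in> ({lam - \<epsilon> <..< lam + \<epsilon>} \<inter> {x - \<delta> .. x + \<delta>} \<inter> {0..})
                   \<union> {max 0 (lam - \<epsilon>), lam + \<epsilon>}. mean_prob n \<gamma> x \<delta>)"
proof -
  define a where "a = nat (\<lfloor>n*(x-\<delta>)\<rfloor> + 1)"
  define c where "c = nat \<lceil>n*(x+\<delta>)\<rceil>"
  define G where "G = (\<lambda>\<gamma>. gfun a c (real n * \<gamma>))"
  define lo where "lo = max 0 (lam - \<epsilon>)"
  define hi where "hi = lam + \<epsilon>"
  define L where "L = {lam - \<epsilon> <..< lam + \<epsilon>} \<inter> {0::real..}"
  define R where "R = ({lam - \<epsilon> <..< lam + \<epsilon>} \<inter> {x - \<delta> .. x + \<delta>} \<inter> {0::real..})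
                   \<union> {max 0 (lam - \<epsilon>), lam + \<epsilon>}"
  define m where "m = min (G lo) (G hi)"
  have mp: "mean_prob n \<gamma> x \<delta> = G \<gamma>" if "\<gamma> \<ge> 0" for \<gamma>
    using mean_prob_eq[OF assms(4) that] unfolding G_def a_def c_def by simp
  have lohi: "0 \<le> lo" "lo < hi" using assms unfolding lo_def hi_def by auto
  have QC: "G \<gamma> \<ge> m" if "lo \<le> \<gamma>" "\<gamma> \<le> hi" for \<gamma>
    unfolding m_def G_def
    using gfun_quasiconcave[of "real n * lo" "real n * \<gamma>" "real n * hi" a c] that lohi
    by (simp add: mult_left_mono)
  have L_sub: "L \<subseteq> {lo..hi}" unfolding L_def lo_def hi_def by auto
  have R_sub: "R \<subseteq> {lo..hi}" unfolding R_def lo_def hi_def using assms by auto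
  have lhs: "(INF \<gamma> \<in> L. mean_prob n \<gamma> x \<delta>) = (INF \<gamma> \<in> L. G \<gamma>)"
    by (rule INF_cong) (auto simp: L_def mp)
  have rhs: "(INF \<gamma> \<in> R. mean_prob n \<gamma> x \<delta>) = (INF \<gamma> \<in> R. G \<gamma>)"
    using assms by (intro INF_cong) (auto simp: R_def intro!: mp)
  have R_val: "(INF \<gamma> \<in> R. G \<gamma>) = m"
  proof (rule cInf_eq_minimum)
    show "m \<in> G ` R" unfolding m_def R_def lo_def hi_def min_def by auto
    show "m \<le> y" if "y \<in> G ` R" for y using that R_sub QC by auto
  qed
  have cont: "continuous_on UNIV G"
    unfolding G_def by (intro continuous_on_compose2[OF gfun_cont] continuous_intros) auto
  have tl: "(G \<longlongrightarrow> G p) (at p within S)" for p S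
    using cont by (meson UNIV_I continuous_on_def tendsto_mono at_le subset_UNIV)
  have bdd: "bdd_below (G ` L)" using L_sub QC by (intro bdd_belowI[of _ m]) auto
  have "lam \<in> L" unfolding L_def using assms by auto
  hence L_ne: "L \<noteq> {}" by blast
  have le_hi: "(INF \<gamma> \<in> L. G \<gamma>) \<le> G hi"
  proof (rule tendsto_lowerbound[OF tl[of hi "{..<hi}"]])
    show "\<forall>\<^sub>F y in at_left hi. (INF \<gamma> \<in> L. G \<gamma>) \<le> G y"
      unfolding eventually_at_left_field
    proof (rule exI[of _ lam], intro conjI allI impI)
      show "lam < hi" using assms unfolding hi_def by simp
      fix y assume "lam < y" "y < hi"
      hence "y \<in> L" using assms unfolding L_def hi_def by auto
      thus "(INF \<gamma> \<in> L. G \<gamma>) \<le> G y" by (rule cINF_lower[OF bdd])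
    qed
  qed (simp add: trivial_limit_at_left_real)
  have le_lo: "(INF \<gamma> \<in> L. G \<gamma>) \<le> G lo"
  proof (rule tendsto_lowerbound[OF tl[of lo "{lo<..}"]])
    show "\<forall>\<^sub>F y in at_right lo. (INF \<gamma> \<in> L. G \<gamma>) \<le> G y"
      unfolding eventually_at_right_field
    proof (rule exI[of _ hi], intro conjI allI impI)
      show "lo < hi" using lohi by simp
      fix y assume "lo < y" "y < hi"
      hence "y \<in> L" unfolding L_def hi_def lo_def by auto
      thus "(INF \<gamma> \<in> L. G \<gamma>) \<le> G y" by (rule cINF_lower[OF bdd])
    qed
  qed (simp add: trivial_limit_at_right_real)
  have L_val: "(INF \<gamma> \<in> L. G \<gamma>) = m"
  proof (rule antisym)
    show "(INF \<gamma> \<in> L. G \<gamma>) \<le> m" using le_hi le_lo unfolding m_def by simp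
    show "m \<le> (INF \<gamma> \<in> L. G \<gamma>)" using L_ne L_sub QC by (intro cINF_greatest) auto
  qed
  show ?thesis using lhs rhs L_val R_val unfolding L_def R_def by simp
qed
end
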